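(* Let $A\in\mathbb{R}^{n\times n}$ be stable and Metzler. Let $\mathcal{C}_1,\dots,\mathcal{C}_r$ be nonempty, pairwise disjoint subsets of $\{1,\dots,n\}$ whose union is $\{1,\dots,n\}$, let $\Pi\in\mathbb{R}^{n\times r}$ with $\Pi_{ij}=1$ if $i\in\mathcal{C}_j$ and $0$ otherwise, let $\alpha\ge 0$, and let $A_r^{(0)}:=(\Pi^\top\Pi)^{-1}\Pi^\top A\Pi-\alpha I_r$ be stable and irreducible. Let $\mu_1$ be the real eigenvalue of $A_r^{(0)}$ with $\mu_1<0$ and ${\rm Re}(\mu)<\mu_1$ for every other eigenvalue $\mu$ of $A_r^{(0)}$, and let $v_1,w_1$ be positive vectors with $A_r^{(0)}v_1=\mu_1 v_1$, $w_1^\top A_r^{(0)}=\mu_1 w_1^\top$, $w_1^\top v_1=1$. For any real $\epsilon>0$ with $\mu_1+\epsilon\le 0$, define $$\bar{A}_r:=A_r^{(0)}-(\mu_1+\epsilon)v_1w_1^\top .$$ Then for any real $\gamma>0$ satisfying $-\gamma I_r\le A_r^{(0)}$ (entrywise), every matrix in $$S_{A_r}(A_r^{(0)},\epsilon,\gamma):=\{A_r\in\mathbb{R}^{r\times r}\,:\,-\gamma I_r\le A_r\le \bar{A}_r\}$$ is stable and Metzler, and $A_r^{(0)}\in S_{A_r}(A_r^{(0)},\epsilon,\gamma)$. Moreover, for every $A_r\in S_{A_r}(A_r^{(0)},\epsilon,\gamma)$, the real parts of all eigenvalues of $A_r$ are less than or equal to $-\epsilon$.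
   Context: For matrices $M,N$ of the same size, $M\le N$ means $M_{ij}\le N_{ij}$ for all $(i,j)$. A matrix is stable if all its eigenvalues have negative real part, and Metzler if all its off-diagonal entries are nonnegative. $A_r^{(0)}$ irreducible means the directed graph on $\{1,\dots,r\}$ with an edge $i\to j$ whenever $i\ne j$ and $(A_r^{(0)})_{ij}\ne 0$ is strongly connected. (Such $\mu_1,v_1,w_1$ exist under these hypotheses.) *)

theory Defs
  imports "HOL-Analysis.Analysis"
begin

definition cmat :: "real^'n^'n \<Rightarrow> complex^'n^'n" where
  "cmat A = (\<chi> i j. complex_of_real (A $ i $ j))"

definition is_eigenvalue :: "real^'n^'n \<Rightarrow> complex \<Rightarrow> bool" where
  "is_eigenvalue A \<mu> \<longleftrightarrow> (\<exists>x::complex^'n. x \<noteq> 0 \<and> cmat A *v x = \<mu> *s x)"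

definition stable :: "real^'n^'n \<Rightarrow> bool" where
  "stable A \<longleftrightarrow> (\<forall>\<mu>. is_eigenvalue A \<mu> \<longrightarrow> Re \<mu> < 0)"

definition metzler :: "real^'n^'n \<Rightarrow> bool" where
  "metzler A \<longleftrightarrow> (\<forall>i j. i \<noteq> j \<longrightarrow> A $ i $ j \<ge> 0)"

text \<open>Irreducible: the digraph with edges i \<rightarrow> j for i \<noteq> j and A_ij \<noteq> 0 is strongly connected.\<close>
definition irreducible_mat :: "real^'n^'n \<Rightarrow> bool" where
  "irreducible_mat A \<longleftrightarrow>
     (\<forall>i j. (i, j) \<in> {(k, l). k \<noteq> l \<and> A $ k $ l \<noteq> 0}\<^sup>*)"

definition mat_le :: "real^'m^'n \<Rightarrow> real^'m^'n \<Rightarrow> bool" where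
  "mat_le M N \<longleftrightarrow> (\<forall>i j. M $ i $ j \<le> N $ i $ j)"

definition outer :: "real^'n \<Rightarrow> real^'n \<Rightarrow> real^'n^'n" where
  "outer v w = (\<chi> i j. v $ i * w $ j)"

definition S_Ar :: "real^'r^'r \<Rightarrow> real^'r \<Rightarrow> real^'r \<Rightarrow> real \<Rightarrow> real \<Rightarrow> real \<Rightarrow> (real^'r^'r) set" where
  "S_Ar A0 v1 w1 \<mu>1 \<epsilon> \<gamma> =
     {Ar. mat_le (- (\<gamma> *\<^sub>R mat 1)) Ar \<and> mat_le Ar (A0 - (\<mu>1 + \<epsilon>) *\<^sub>R outer v1 w1)}"

end

theory Submission
  imports Defs
begin

lemma gersh:
  fixes M :: "real^'n::finite^'n" and v :: "real^'n"
  assumes met: "metzler M" and vpos: "\<And>i. v $ i > 0"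
    and Mv: "\<And>i. (M *v v) $ i \<le> c * v $ i"
    and ev: "is_eigenvalue M \<mu>"
  shows "Re \<mu> \<le> c"
proof -
  obtain x :: "complex^'n" where x0: "x \<noteq> 0" and ex: "cmat M *v x = \<mu> *s x"
    using ev unfolding is_eigenvalue_def by blast
  define f where "f j = norm (x $ j) / v $ j" for j
  define t where "t = Max (f ` UNIV)"
  have fle: "f j \<le> t" for j unfolding t_def by simp
  have "t \<in> f ` UNIV" unfolding t_def by (rule Max_in) auto
  then obtain i where ti: "t = f i" by auto
  obtain k where "x $ k \<noteq> 0" using x0 by (metis vec_eq_iff zero_index)
  then have "f k > 0" unfolding f_def using vpos[of k] by simp
  then have tpos: "t > 0" using fle[of k] by linarith
  have xj: "norm (x $ j) \<le> t * v $ j" for j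
    using fle[of j] vpos[of j] unfolding f_def by (simp add: divide_le_eq)
  have xi: "norm (x $ i) = t * v $ i" using ti vpos[of i] unfolding f_def by simp
  have "(cmat M *v x) $ i = (\<mu> *s x) $ i" using ex by simp
  then have eq: "\<mu> * x $ i = (\<Sum>j\<in>UNIV. of_real (M $ i $ j) * x $ j)"
    by (simp add: matrix_vector_mult_def cmat_def)
  have rem: "(\<Sum>j\<in>UNIV. of_real (M $ i $ j) * x $ j) = of_real (M $ i $ i) * x $ i + (\<Sum>j\<in>UNIV-{i}. of_real (M $ i $ j) * x $ j)"
    by (simp add: sum.remove)
  have eq2: "(\<mu> - of_real (M $ i $ i)) * x $ i = (\<Sum>j\<in>UNIV-{i}. of_real (M $ i $ j) * x $ j)"
    using eq rem by (simp add: algebra_simps)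
  have "norm (\<mu> - of_real (M $ i $ i)) * (t * v $ i) = norm (\<Sum>j\<in>UNIV-{i}. of_real (M $ i $ j) * x $ j)"
    using eq2 xi by (metis norm_mult)
  also have "\<dots> \<le> (\<Sum>j\<in>UNIV-{i}. norm (of_real (M $ i $ j) * x $ j))" by (rule norm_sum)
  also have "\<dots> \<le> (\<Sum>j\<in>UNIV-{i}. M $ i $ j * (t * v $ j))"
  proof (rule sum_mono)
    fix j assume "j \<in> UNIV - {i}"
    then have "M $ i $ j \<ge> 0" using met unfolding metzler_def by auto
    then show "norm (of_real (M $ i $ j) * x $ j) \<le> M $ i $ j * (t * v $ j)"
      using xj[of j] by (simp add: norm_mult mult_left_mono)
  qed
  also have "\<dots> = t * (\<Sum>j\<in>UNIV-{i}. M $ i $ j * v $ j)"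
    by (simp add: sum_distrib_left algebra_simps)
  also have "(\<Sum>j\<in>UNIV-{i}. M $ i $ j * v $ j) = (M *v v) $ i - M $ i $ i * v $ i"
    by (simp add: matrix_vector_mult_def sum.remove[of UNIV i])
  also have "t * \<dots> \<le> t * ((c - M $ i $ i) * v $ i)"
    using Mv[of i] tpos by (intro mult_left_mono) (auto simp: algebra_simps)
  finally have "norm (\<mu> - of_real (M $ i $ i)) * (t * v $ i) \<le> (c - M $ i $ i) * (t * v $ i)"
    by (simp add: algebra_simps)
  moreover have "t * v $ i > 0" using tpos vpos[of i] by simp
  ultimately have "norm (\<mu> - of_real (M $ i $ i)) \<le> c - M $ i $ i"
    by (meson mult_le_cancel_right_pos)
  moreover have "Re (\<mu> - of_real (M $ i $ i)) \<le> norm (\<mu> - of_real (M $ i $ i))"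
    by (rule complex_Re_le_cmod)
  ultimately show ?thesis by simp
qed

lemma Bv_lemma:
  fixes A0 :: "real^'r::finite^'r" and v1 w1 :: "real^'r"
  assumes h16: "A0 *v v1 = \<mu>1 *\<^sub>R v1" and h18: "w1 \<bullet> v1 = 1"
  shows "((A0 - (\<mu>1 + \<epsilon>) *\<^sub>R outer v1 w1) *v v1) $ i = - \<epsilon> * v1 $ i"
proof -
  have outc: "outer v1 w1 $ i $ j = v1 $ i * w1 $ j" for i j by (simp add: outer_def)
  let ?B = "A0 - (\<mu>1 + \<epsilon>) *\<^sub>R outer v1 w1"
  have 1: "(?B *v v1) $ i = (\<Sum>j\<in>UNIV. A0 $ i $ j * v1 $ j - (\<mu>1 + \<epsilon>) * v1 $ i * (w1 $ j * v1 $ j))"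
        unfolding matrix_vector_mult_def vec_lambda_beta
        by (rule sum.cong) (simp_all add: outc left_diff_distrib)
  have 2: "(\<Sum>j\<in>UNIV. A0 $ i $ j * v1 $ j - (\<mu>1 + \<epsilon>) * v1 $ i * (w1 $ j * v1 $ j)) = (\<Sum>j\<in>UNIV. A0 $ i $ j * v1 $ j) - (\<mu>1 + \<epsilon>) * v1 $ i * (\<Sum>j\<in>UNIV. w1 $ j * v1 $ j)"
        by (simp only: sum_subtractf sum_distrib_left)
  have 3: "(\<Sum>j\<in>UNIV. A0 $ i $ j * v1 $ j) = \<mu>1 * v1 $ i"
      using arg_cong[OF h16, of "\<lambda>z. z $ i"] by (simp add: matrix_vector_mult_def)
  have 4: "(\<Sum>j\<in>UNIV. w1 $ j * v1 $ j) = 1" using h18 by (simp add: inner_vec_def)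
  show ?thesis unfolding 1 2 3 4 by (simp add: algebra_simps)
qed

theorem theorem1:
  fixes A :: "real^'n^'n" and C :: "'r::finite \<Rightarrow> 'n::finite set" and Pm :: "real^'r^'n"
    and \<alpha> :: real and A0 :: "real^'r^'r"
    and \<mu>1 :: real and v1 w1 :: "real^'r" and \<epsilon> \<gamma> :: real
  assumes "stable A" and "metzler A"
    and "\<And>j. C j \<noteq> {}"
    and "\<And>j k. j \<noteq> k \<Longrightarrow> C j \<inter> C k = {}"
    and "(\<Union>j. C j) = UNIV"
    and "\<And>i j. Pm $ i $ j = (if i \<in> C j then 1 else 0)"
    and "\<alpha> \<ge> 0"
    and A0_def: "A0 = matrix_inv (transpose Pm ** Pm) ** transpose Pm ** A ** Pm - \<alpha> *\<^sub>R mat 1"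
    and "stable A0" and "irreducible_mat A0"
    and "is_eigenvalue A0 (complex_of_real \<mu>1)" and "\<mu>1 < 0"
    and "\<And>\<mu>. is_eigenvalue A0 \<mu> \<Longrightarrow> \<mu> \<noteq> complex_of_real \<mu>1 \<Longrightarrow> Re \<mu> < \<mu>1"
    and "\<And>i. v1 $ i > 0" and "\<And>i. w1 $ i > 0"
    and "A0 *v v1 = \<mu>1 *\<^sub>R v1" and "w1 v* A0 = \<mu>1 *\<^sub>R w1"
    and "w1 \<bullet> v1 = 1"
    and "\<epsilon> > 0" and "\<mu>1 + \<epsilon> \<le> 0"
    and "\<gamma> > 0" and "mat_le (- (\<gamma> *\<^sub>R mat 1)) A0"
  shows "(\<forall>Ar \<in> S_Ar A0 v1 w1 \<mu>1 \<epsilon> \<gamma>. stable Ar \<and> metzler Ar)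
         \<and> A0 \<in> S_Ar A0 v1 w1 \<mu>1 \<epsilon> \<gamma>
         \<and> (\<forall>Ar \<in> S_Ar A0 v1 w1 \<mu>1 \<epsilon> \<gamma>. \<forall>\<mu>. is_eigenvalue Ar \<mu> \<longrightarrow> Re \<mu> \<le> - \<epsilon>)"
proof -
  note a = assms
  have matc: "(mat 1 :: real^'r^'r) $ i $ j = (if i = j then 1 else 0)" for i j
    by (simp add: mat_def)
  have outc: "outer v1 w1 $ i $ j = v1 $ i * w1 $ j" for i j by (simp add: outer_def)
  let ?B = "A0 - (\<mu>1 + \<epsilon>) *\<^sub>R outer v1 w1"
  have Bv: "(?B *v v1) $ i = - \<epsilon> * v1 $ i" for i by (rule Bv_lemma[OF a(16) a(18)])
  have metz: "metzler Ar" if "Ar \<in> S_Ar A0 v1 w1 \<mu>1 \<epsilon> \<gamma>" for Ar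
    unfolding metzler_def
  proof (intro allI impI)
    fix i j :: 'r assume ij: "i \<noteq> j"
    have "(- (\<gamma> *\<^sub>R mat 1)) $ i $ j \<le> Ar $ i $ j"
      using that unfolding S_Ar_def mat_le_def by blast
    moreover have "(- (\<gamma> *\<^sub>R mat 1 :: real^'r^'r)) $ i $ j = 0" using ij by (simp add: matc)
    ultimately show "0 \<le> Ar $ i $ j" by metis
  qed
  have eig: "Re \<mu> \<le> - \<epsilon>" if "Ar \<in> S_Ar A0 v1 w1 \<mu>1 \<epsilon> \<gamma>" "is_eigenvalue Ar \<mu>" for Ar \<mu>
  proof (rule gersh[OF metz[OF that(1)] a(14) _ that(2)])
    fix i
    have le: "Ar $ i $ j \<le> ?B $ i $ j" for j using that(1) unfolding S_Ar_def mat_le_def by auto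
    have "(Ar *v v1) $ i \<le> (?B *v v1) $ i"
      unfolding matrix_vector_mult_def vec_lambda_beta
      by (rule sum_mono) (use le a(14) in \<open>auto intro: mult_right_mono less_imp_le\<close>)
    then show "(Ar *v v1) $ i \<le> - \<epsilon> * v1 $ i" using Bv by simp
  qed
  have inS: "A0 \<in> S_Ar A0 v1 w1 \<mu>1 \<epsilon> \<gamma>"
    unfolding S_Ar_def mat_le_def
  proof (intro CollectI conjI allI)
    fix i j
    show "(- (\<gamma> *\<^sub>R mat 1)) $ i $ j \<le> A0 $ i $ j" using a(22) unfolding mat_le_def by blast
    have "0 \<le> - (\<mu>1 + \<epsilon>) * (v1 $ i * w1 $ j)"
      using a(20) a(14)[of i] a(15)[of j] by (intro mult_nonneg_nonneg) auto
    then show "A0 $ i $ j \<le> ?B $ i $ j" by (simp add: outc algebra_simps)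
  qed
  have "stable Ar" if "Ar \<in> S_Ar A0 v1 w1 \<mu>1 \<epsilon> \<gamma>" for Ar
    unfolding stable_def using eig[OF that] a(19) by force
  then show ?thesis using metz inS eig by blast
qed

end
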